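(* Let $\mathbb{X},\mathbb{Y}$ be two-dimensional smooth real Banach spaces, with $\mathbb{Y}$ in addition strictly convex. Let $T\in\mathbb{L}(\mathbb{X},\mathbb{Y})$ be of rank one with $\|T\|=1$. If $(x,Tx)$ is not a CPP for some $x\in M_T$, then $T$ is an extreme contraction.
   Context: $M_T=\{x\in S_{\mathbb{X}}:\|Tx\|=\|T\|\}$. A norm one $T$ is an extreme contraction if it is an extreme point of the closed unit ball of $\mathbb{L}(\mathbb{X},\mathbb{Y})$. $B(x,r)=\{u:\|u-x\|<r\}$. $x\perp_B y$ means $\|x+\lambda y\|\ge\|x\|$ for all real $\lambda$; $x^\perp=\{y:x\perp_By\}$. For $x\in S_{\mathbb{X}}$, $y\in S_{\mathbb{Y}}$, $(x,y)$ is a CPP if there exist $r>0,\mu>0$ such that for all $z\in x^\perp\cap S_{\mathbb{X}}$, all $w\in y^\perp\cap S_{\mathbb{Y}}$ and all $a,b\in\mathbb{R}$, $ax+bz\in B(x,r)\cap S_{\mathbb{X}}$ implies $\|ay+b\mu w\|\le1$. *)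

theory Defs
  imports "HOL-Analysis.Analysis"
begin

definition smooth_space :: "'a::real_normed_vector itself \<Rightarrow> bool" where
  "smooth_space _ \<longleftrightarrow>
     (\<forall>x::'a. norm x = 1 \<longrightarrow> (\<exists>!f::'a \<Rightarrow>\<^sub>L real. norm f = 1 \<and> blinfun_apply f x = 1))"

definition strictly_convex_space :: "'a::real_normed_vector itself \<Rightarrow> bool" where
  "strictly_convex_space _ \<longleftrightarrow>
     (\<forall>x y::'a. norm x = 1 \<longrightarrow> norm y = 1 \<longrightarrow> x \<noteq> y \<longrightarrow> norm ((1/2) *\<^sub>R (x + y)) < 1)"

definition birkhoff_orth :: "'a::real_normed_vector \<Rightarrow> 'a \<Rightarrow> bool" where
  "birkhoff_orth x y \<longleftrightarrow> (\<forall>t::real. norm (x + t *\<^sub>R y) \<ge> norm x)"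

definition norm_attain_set :: "('a::real_normed_vector \<Rightarrow>\<^sub>L 'b::real_normed_vector) \<Rightarrow> 'a set" where
  "norm_attain_set T = {x. norm x = 1 \<and> norm (blinfun_apply T x) = norm T}"

definition CPP :: "'a::real_normed_vector \<Rightarrow> 'b::real_normed_vector \<Rightarrow> bool" where
  "CPP x y \<longleftrightarrow> norm x = 1 \<and> norm y = 1 \<and>
     (\<exists>r>0. \<exists>\<mu>>0. \<forall>z w a b.
        birkhoff_orth x z \<longrightarrow> norm z = 1 \<longrightarrow> birkhoff_orth y w \<longrightarrow> norm w = 1 \<longrightarrow>
        (a *\<^sub>R x + b *\<^sub>R z \<in> ball x r \<and> norm (a *\<^sub>R x + b *\<^sub>R z) = 1) \<longrightarrow>
        norm (a *\<^sub>R y + (b * \<mu>) *\<^sub>R w) \<le> 1)"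

definition extreme_contraction :: "('a::real_normed_vector \<Rightarrow>\<^sub>L 'b::real_normed_vector) \<Rightarrow> bool" where
  "extreme_contraction T \<longleftrightarrow> norm T = 1 \<and> T extreme_point_of (cball 0 1)"

end

theory Submission
  imports Defs
begin

lemma orth_indep:
  fixes u v :: "'a::real_normed_vector"
  assumes "u \<noteq> 0" "birkhoff_orth u v" "v \<noteq> 0" "a *\<^sub>R u + b *\<^sub>R v = 0"
  shows "a = 0 \<and> b = 0"
proof -
  have "a = 0"
  proof (rule ccontr)
    assume a: "a \<noteq> 0"
    have "u + (b/a) *\<^sub>R v = (1/a) *\<^sub>R (a *\<^sub>R u + b *\<^sub>R v)" using a by (simp add: algebra_simps)
    also have "\<dots> = 0" using assms(4) by simp
    finally have "norm (u + (b/a) *\<^sub>R v) = 0" by simp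
    moreover have "norm (u + (b/a) *\<^sub>R v) \<ge> norm u" using assms(2) unfolding birkhoff_orth_def by blast
    ultimately show False using assms(1) by simp
  qed
  with assms show ?thesis by simp
qed

lemma indep_card_dim_span:
  fixes B V :: "'a::real_vector set"
  assumes "B \<subseteq> V" "independent B" "finite B" "card B = dim V" "card B > 0"
  shows "V \<subseteq> span B"
proof
  fix p assume pV: "p \<in> V"
  show "p \<in> span B"
  proof (rule ccontr)
    assume np: "p \<notin> span B"
    hence ind: "independent (insert p B)" using assms(2) by (rule independent_insertI)
    obtain A where A: "A \<subseteq> V" "independent A" "V \<subseteq> span A" "card A = dim V"
      using basis_exists by blast
    have fA: "finite A" using A(4) assms(4,5) card_ge_0_finite[of A] by simp
    have "insert p B \<subseteq> span A" using A(3) pV assms(1) by auto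
    hence "card (insert p B) \<le> card A" using independent_span_bound[OF fA ind] by blast
    moreover have "p \<notin> B" using np span_base by blast
    ultimately show False using assms(3,4) A(4) by simp
  qed
qed

lemma orth_span:
  fixes u v :: "'a::real_normed_vector"
  assumes d: "dim (UNIV :: 'a set) = 2" and "u \<noteq> 0" "birkhoff_orth u v" "v \<noteq> 0"
  shows "\<exists>a b. p = a *\<^sub>R u + b *\<^sub>R v"
proof -
  have uv: "u \<noteq> v" using orth_indep[OF assms(2-4), of 1 "-1"] by auto
  have "u \<notin> span {v}"
  proof
    assume "u \<in> span {v}"
    then obtain k where "u = k *\<^sub>R v" by (auto simp: span_singleton)
    then show False using orth_indep[OF assms(2-4), of 1 "-k"] by auto
  qed
  hence ind: "independent {u, v}" using assms(4) by (simp add: independent_insert uv)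
  have "UNIV \<subseteq> span {u, v}"
    using indep_card_dim_span[of "{u,v}" UNIV] ind uv d by simp
  hence "p \<in> span {u, v}" by auto
  then obtain k where "p - k *\<^sub>R u \<in> span {v}" by (auto simp: span_insert)
  then obtain m where "p - k *\<^sub>R u = m *\<^sub>R v" by (auto simp: span_singleton)
  hence "p = k *\<^sub>R u + m *\<^sub>R v" by (simp add: algebra_simps)
  thus ?thesis by blast
qed

lemma smooth_orth_zero:
  fixes u v :: "'a::real_normed_vector" and \<phi> :: "'a \<Rightarrow>\<^sub>L real"
  assumes sm: "smooth_space TYPE('a)" and d: "dim (UNIV :: 'a set) = 2"
    and nu: "norm u = 1" and orth: "birkhoff_orth u v" and v0: "v \<noteq> 0"
    and nphi: "norm \<phi> \<le> 1" and phiu: "blinfun_apply \<phi> u = 1"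
  shows "blinfun_apply \<phi> v = 0"
proof -
  have u0: "u \<noteq> 0" using nu by auto
  have ex: "\<exists>a b. p = a *\<^sub>R u + b *\<^sub>R v" for p using orth_span[OF d u0 orth v0] .
  have un: "a = a'" if "p = a *\<^sub>R u + b *\<^sub>R v" "p = a' *\<^sub>R u + b' *\<^sub>R v" for p a b a' b'
  proof -
    have "(a - a') *\<^sub>R u + (b - b') *\<^sub>R v = 0" using that by (simp add: algebra_simps)
    thus ?thesis using orth_indep[OF u0 orth v0, of "a - a'" "b - b'"] by auto
  qed
  define f where "f p = (THE a. \<exists>b. p = a *\<^sub>R u + b *\<^sub>R v)" for p
  have feq: "f p = a" if "p = a *\<^sub>R u + b *\<^sub>R v" for p a b
    unfolding f_def
  proof (rule the_equality)
    show "\<exists>b. p = a *\<^sub>R u + b *\<^sub>R v" using that by blast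
  next
    fix a' assume "\<exists>b. p = a' *\<^sub>R u + b *\<^sub>R v"
    then obtain b' where "p = a' *\<^sub>R u + b' *\<^sub>R v" by blast
    thus "a' = a" using un[OF that] by simp
  qed
  have lin: "linear f"
  proof
    fix p q
    obtain a b where p: "p = a *\<^sub>R u + b *\<^sub>R v" using ex by blast
    obtain a' b' where q: "q = a' *\<^sub>R u + b' *\<^sub>R v" using ex by blast
    have "p + q = (a + a') *\<^sub>R u + (b + b') *\<^sub>R v" using p q by (simp add: algebra_simps)
    thus "f (p + q) = f p + f q" using feq[OF p] feq[OF q] feq by simp
  next
    fix c p
    obtain a b where p: "p = a *\<^sub>R u + b *\<^sub>R v" using ex by blast
    have "c *\<^sub>R p = (c * a) *\<^sub>R u + (c * b) *\<^sub>R v" using p by (simp add: algebra_simps)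
    thus "f (c *\<^sub>R p) = c *\<^sub>R f p" using feq[OF p] feq by simp
  qed
  have bnd: "norm (f p) \<le> norm p" for p
  proof -
    obtain a b where p: "p = a *\<^sub>R u + b *\<^sub>R v" using ex by blast
    show ?thesis
    proof (cases "a = 0")
      case True thus ?thesis using feq[OF p] by simp
    next
      case False
      have "p = a *\<^sub>R (u + (b/a) *\<^sub>R v)" using p False by (simp add: algebra_simps)
      hence "norm p = \<bar>a\<bar> * norm (u + (b/a) *\<^sub>R v)" by simp
      moreover have "norm (u + (b/a) *\<^sub>R v) \<ge> 1" using orth nu unfolding birkhoff_orth_def by simp
      ultimately have "norm p \<ge> \<bar>a\<bar>" using mult_left_mono[of 1 "norm (u + (b/a) *\<^sub>R v)" "\<bar>a\<bar>"] by simp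
      thus ?thesis using feq[OF p] by simp
    qed
  qed
  have bl: "bounded_linear f"
    proof (rule bounded_linear_intro[where K=1])
    show "f (p + q) = f p + f q" for p q using lin by (simp add: linear_add)
    show "f (c *\<^sub>R p) = c *\<^sub>R f p" for c p using lin by (simp add: linear_scale)
    show "norm (f p) \<le> norm p * 1" for p using bnd by simp
  qed
  define F where "F = Blinfun f"
  have Fap: "blinfun_apply F = f" unfolding F_def using bl by (rule bounded_linear_Blinfun_apply)
  have Fu: "blinfun_apply F u = 1" using Fap feq[of u 1 0] by simp
  have Fv: "blinfun_apply F v = 0" using Fap feq[of v 0 1] by simp
  have "norm F \<le> 1" by (rule norm_blinfun_bound) (use bnd in \<open>auto simp: Fap\<close>)
  moreover have "1 \<le> norm F" using norm_blinfun[of F u] Fu nu by simp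
  ultimately have nF: "norm F = 1" by simp
  have nphi1: "norm \<phi> = 1" using nphi norm_blinfun[of \<phi> u] phiu nu by simp
  have "\<phi> = F" using sm nu nF Fu nphi1 phiu unfolding smooth_space_def by blast
  thus ?thesis using Fv by simp
qed

lemma convex_norm_le1:
  fixes A B :: "'a::real_normed_vector"
  assumes "norm A \<le> 1" "norm B \<le> 1" "\<alpha> \<ge> 0" "\<beta> \<ge> 0" "\<alpha> + \<beta> = 1"
  shows "norm (\<alpha> *\<^sub>R A + \<beta> *\<^sub>R B) \<le> 1"
proof -
  have "norm (\<alpha> *\<^sub>R A + \<beta> *\<^sub>R B) \<le> \<alpha> * norm A + \<beta> * norm B"
    using norm_triangle_ineq[of "\<alpha> *\<^sub>R A" "\<beta> *\<^sub>R B"] assms(3,4) by simp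
  also have "\<dots> \<le> \<alpha> * 1 + \<beta> * 1"
    using assms by (intro add_mono mult_left_mono) auto
  finally show ?thesis using assms(5) by simp
qed

theorem mainTheorem5:
  fixes T :: "'a::banach \<Rightarrow>\<^sub>L 'b::banach"
  assumes "dim (UNIV :: 'a set) = 2" and "dim (UNIV :: 'b set) = 2"
    and "smooth_space TYPE('a)" and "smooth_space TYPE('b)"
    and "strictly_convex_space TYPE('b)"
    and "dim (range (blinfun_apply T)) = 1"
    and "norm T = 1"
    and "\<exists>x \<in> norm_attain_set T. \<not> CPP x (blinfun_apply T x)"
  shows "extreme_contraction T"
proof (rule ccontr)
  assume ne: "\<not> extreme_contraction T"
  note dA = assms(1) and dB = assms(2) and smA = assms(3) and smB = assms(4) and sc = assms(5)
  obtain x where xM: "x \<in> norm_attain_set T" and nc: "\<not> CPP x (blinfun_apply T x)"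
    using assms(8) by blast
  have "T \<in> cball 0 1" using assms(7) by simp
  then obtain A B where A: "A \<in> cball 0 1" and B: "B \<in> cball 0 1" and TAB: "T \<in> open_segment A B"
    using ne assms(7) unfolding extreme_contraction_def extreme_point_of_def by blast
  obtain t where t: "0 < t" "t < 1" "T = (1 - t) *\<^sub>R A + t *\<^sub>R B" and AB: "A \<noteq> B"
    using TAB unfolding in_segment by blast
  define c where "c = min t (1 - t)"
  have c: "c > 0" "c \<le> t" "c \<le> 1 - t" using t unfolding c_def by auto
  define S where "S = c *\<^sub>R (B - A)"
  have S0: "S \<noteq> 0" using c AB unfolding S_def by simp
  have nA: "norm A \<le> 1" and nB: "norm B \<le> 1" using A B by auto
  have "T + S = (1 - t - c) *\<^sub>R A + (t + c) *\<^sub>R B" using t unfolding S_def by (simp add: algebra_simps)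
  hence nTpS: "norm (T + S) \<le> 1" using convex_norm_le1[OF nA nB, of "1 - t - c" "t + c"] c t by simp
  have "T - S = (1 - t + c) *\<^sub>R A + (t - c) *\<^sub>R B" using t unfolding S_def by (simp add: algebra_simps)
  hence nTmS: "norm (T - S) \<le> 1" using convex_norm_le1[OF nA nB, of "1 - t + c" "t - c"] c t by simp
  define y where "y = blinfun_apply T x"
  have nx: "norm x = 1" and ny: "norm y = 1" using xM assms(7) unfolding norm_attain_set_def y_def by auto
  have x0: "x \<noteq> 0" and y0: "y \<noteq> 0" using nx ny by auto
  have bndp: "norm (blinfun_apply (T + S) p) \<le> norm p" for p
    using norm_blinfun[of "T + S" p] nTpS mult_right_mono[OF nTpS norm_ge_zero[of p]] by simp
  have bndm: "norm (blinfun_apply (T - S) p) \<le> norm p" for p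
    using norm_blinfun[of "T - S" p] nTmS mult_right_mono[OF nTmS norm_ge_zero[of p]] by simp
  have Sx: "blinfun_apply S x = 0"
  proof (rule ccontr)
    assume Sx0: "blinfun_apply S x \<noteq> 0"
    define p where "p = y + blinfun_apply S x"
    define q where "q = y - blinfun_apply S x"
    have np: "norm p \<le> 1" using bndp[of x] nx unfolding p_def y_def by (simp add: blinfun.add_left)
    have nq: "norm q \<le> 1" using bndm[of x] nx unfolding q_def y_def by (simp add: blinfun.diff_left)
    have pq: "p + q = 2 *\<^sub>R y" unfolding p_def q_def by (simp add: scaleR_2)
    have "2 = norm (p + q)" using pq ny by simp
    also have "\<dots> \<le> norm p + norm q" by (rule norm_triangle_ineq)
    finally have "norm p = 1" "norm q = 1" using np nq by auto
    moreover have "p \<noteq> q" using Sx0 unfolding p_def q_def by (simp add: algebra_simps flip: scaleR_2)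
    ultimately have "norm ((1/2) *\<^sub>R (p + q)) < 1" using sc unfolding strictly_convex_space_def by blast
    thus False using pq ny by simp
  qed
  obtain h :: "'b \<Rightarrow>\<^sub>L real" where nh: "norm h = 1" and hy: "blinfun_apply h y = 1"
    using smB ny unfolding smooth_space_def by blast
  have nphi: "norm (h o\<^sub>L T) \<le> 1" using norm_blinfun_compose[of h T] nh assms(7) by simp
  have phix: "blinfun_apply (h o\<^sub>L T) x = 1" using hy y_def by simp
  have npsi: "norm (h o\<^sub>L (T + S)) \<le> 1"
    using norm_blinfun_compose[of h "T + S"] nh nTpS by simp
  have psix: "blinfun_apply (h o\<^sub>L (T + S)) x = 1" using hy Sx y_def by (simp add: blinfun.add_left)
  have rng: "\<exists>k. blinfun_apply T p = k *\<^sub>R y" for p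
  proof -
    have indy: "independent {y}" using y0 by (simp add: independent_insert)
    have "range (blinfun_apply T) \<subseteq> span {y}"
      using indep_card_dim_span[of "{y}" "range (blinfun_apply T)"] indy assms(6) y_def by simp
    hence "blinfun_apply T p \<in> span {y}" by auto
    thus ?thesis by (auto simp: span_singleton)
  qed
  have zprop: "blinfun_apply T z = 0 \<and> blinfun_apply h (blinfun_apply S z) = 0"
    if nz: "norm z = 1" and oz: "birkhoff_orth x z" for z
  proof -
    have z0: "z \<noteq> 0" using nz by auto
    have e1: "blinfun_apply (h o\<^sub>L T) z = 0" by (rule smooth_orth_zero[OF smA dA nx oz z0 nphi phix])
    have e2: "blinfun_apply (h o\<^sub>L (T + S)) z = 0" by (rule smooth_orth_zero[OF smA dA nx oz z0 npsi psix])
    obtain k where k: "blinfun_apply T z = k *\<^sub>R y" using rng by blast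
    have "k = 0" using e1 k hy by (simp add: blinfun.scaleR_right)
    hence "blinfun_apply T z = 0" using k by simp
    moreover have "blinfun_apply h (blinfun_apply S z) = 0" using e1 e2 by (simp add: blinfun.add_left blinfun.add_right)
    ultimately show ?thesis by simp
  qed
  have wprop: "blinfun_apply h w = 0" if nw: "norm w = 1" and ow: "birkhoff_orth y w" for w
  proof -
    have w0: "w \<noteq> 0" using nw by auto
    show ?thesis by (rule smooth_orth_zero[OF smB dB ny ow w0 _ hy]) (simp add: nh)
  qed
  have Szw: "\<exists>\<beta>. blinfun_apply S z = \<beta> *\<^sub>R w \<and> \<bar>\<beta>\<bar> = norm (blinfun_apply S z)"
    if nz: "norm z = 1" and oz: "birkhoff_orth x z" and nw: "norm w = 1" and ow: "birkhoff_orth y w" for z w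
  proof -
    have w0: "w \<noteq> 0" using nw by auto
    obtain \<alpha> \<beta> where ab: "blinfun_apply S z = \<alpha> *\<^sub>R y + \<beta> *\<^sub>R w"
      using orth_span[OF dB y0 ow w0] by blast
    have "blinfun_apply h (blinfun_apply S z) = \<alpha>"
      using ab hy wprop[OF nw ow] by (simp add: blinfun.add_right blinfun.scaleR_right)
    hence "\<alpha> = 0" using zprop[OF nz oz] by simp
    hence "blinfun_apply S z = \<beta> *\<^sub>R w" using ab by simp
    thus ?thesis using nw by auto
  qed
  have "\<exists>\<mu>>0. \<forall>z. norm z = 1 \<and> birkhoff_orth x z \<longrightarrow> norm (blinfun_apply S z) = \<mu>"
  proof (cases "\<exists>z1. norm z1 = 1 \<and> birkhoff_orth x z1")
    case False thus ?thesis by (intro exI[of _ 1]) auto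
  next
    case True
    then obtain z1 where nz1: "norm z1 = 1" and oz1: "birkhoff_orth x z1" by blast
    have z10: "z1 \<noteq> 0" using nz1 by auto
    have Tz1: "blinfun_apply T z1 = 0" using zprop[OF nz1 oz1] by simp
    have "blinfun_apply S z1 \<noteq> 0"
    proof
      assume Sz1: "blinfun_apply S z1 = 0"
      have "S = 0"
      proof (rule blinfun_eqI)
        fix p
        obtain a b where "p = a *\<^sub>R x + b *\<^sub>R z1" using orth_span[OF dA x0 oz1 z10] by blast
        thus "blinfun_apply S p = blinfun_apply 0 p" using Sx Sz1 by (simp add: blinfun.add_right blinfun.scaleR_right)
      qed
      thus False using S0 by simp
    qed
    hence pos: "norm (blinfun_apply S z1) > 0" by simp
    have "norm (blinfun_apply S z) = norm (blinfun_apply S z1)" if nz: "norm z = 1" and oz: "birkhoff_orth x z" for z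
    proof -
      obtain a b where zab: "z = a *\<^sub>R x + b *\<^sub>R z1" using orth_span[OF dA x0 oz1 z10] by blast
      have "0 = blinfun_apply T z" using zprop[OF nz oz] by simp
      also have "\<dots> = a *\<^sub>R y" using zab Tz1 y_def by (simp add: blinfun.add_right blinfun.scaleR_right)
      finally have "a = 0" using y0 by simp
      hence zb: "z = b *\<^sub>R z1" using zab by simp
      hence "\<bar>b\<bar> = 1" using nz nz1 by simp
      thus ?thesis using zb by (simp add: blinfun.scaleR_right)
    qed
    thus ?thesis using pos by blast
  qed
  then obtain \<mu> where mu: "\<mu> > 0" and muz: "\<And>z. norm z = 1 \<Longrightarrow> birkhoff_orth x z \<Longrightarrow> norm (blinfun_apply S z) = \<mu>"
    by blast
  have key: "\<forall>z w a b.
        birkhoff_orth x z \<longrightarrow> norm z = 1 \<longrightarrow> birkhoff_orth y w \<longrightarrow> norm w = 1 \<longrightarrow>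
        (a *\<^sub>R x + b *\<^sub>R z \<in> ball x 1 \<and> norm (a *\<^sub>R x + b *\<^sub>R z) = 1) \<longrightarrow>
        norm (a *\<^sub>R y + (b * \<mu>) *\<^sub>R w) \<le> 1"
  proof (intro allI impI)
    fix z w a b
    assume oz: "birkhoff_orth x z" and nz: "norm z = 1" and ow: "birkhoff_orth y w" and nw: "norm w = 1"
      and u: "a *\<^sub>R x + b *\<^sub>R z \<in> ball x 1 \<and> norm (a *\<^sub>R x + b *\<^sub>R z) = 1"
    obtain \<beta> where be: "blinfun_apply S z = \<beta> *\<^sub>R w" "\<bar>\<beta>\<bar> = norm (blinfun_apply S z)"
      using Szw[OF nz oz nw ow] by blast
    have Tz: "blinfun_apply T z = 0" using zprop[OF nz oz] by simp
    have bmu: "\<bar>\<beta>\<bar> = \<mu>" using be(2) muz[OF nz oz] by simp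
    define p where "p = a *\<^sub>R x + b *\<^sub>R z"
    have np: "norm p = 1" using u p_def by simp
    have ep: "blinfun_apply (T + S) p = a *\<^sub>R y + (b * \<beta>) *\<^sub>R w"
      unfolding p_def using Tz Sx be(1) y_def by (simp add: blinfun.add_left blinfun.add_right blinfun.scaleR_right)
    have em: "blinfun_apply (T - S) p = a *\<^sub>R y + (- b * \<beta>) *\<^sub>R w"
      unfolding p_def using Tz Sx be(1) y_def by (simp add: blinfun.diff_left blinfun.add_right blinfun.scaleR_right)
    show "norm (a *\<^sub>R y + (b * \<mu>) *\<^sub>R w) \<le> 1"
    proof (cases "\<beta> = \<mu>")
      case True thus ?thesis using ep bndp[of p] np by simp
    next
      case False
      hence "\<beta> = - \<mu>" using bmu by auto
      thus ?thesis using em bndm[of p] np by simp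
    qed
  qed
  have ex: "\<exists>r>(0::real). \<exists>\<mu>'>(0::real). \<forall>z w a b.
        birkhoff_orth x z \<longrightarrow> norm z = 1 \<longrightarrow> birkhoff_orth y w \<longrightarrow> norm w = 1 \<longrightarrow>
        (a *\<^sub>R x + b *\<^sub>R z \<in> ball x r \<and> norm (a *\<^sub>R x + b *\<^sub>R z) = 1) \<longrightarrow>
        norm (a *\<^sub>R y + (b * \<mu>') *\<^sub>R w) \<le> 1"
    apply (rule exI[of _ 1])
    apply (rule conjI)
     apply (rule zero_less_one)
    apply (rule exI[of _ \<mu>])
    apply (rule conjI)
     apply (rule mu)
    apply (rule key)
    done
  have "CPP x y" unfolding CPP_def using nx ny ex by (intro conjI)
  thus False using nc y_def by simp
qed

end
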